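(* Let $R=K[x_1,\dots,x_n]$ and let $s,t,c$ be positive integers with $s\ge 2t$, $2\le c\le n$. Let $I\subset R$ be a homogeneous Gorenstein ideal of codimension $c$ whose graded minimal free resolution has the form $0\to F_c\to F_{c-1}\to\dots\to F_1\to F_0\to R/I\to0$ with $F_0=R$, $F_c=R(-s-c)$, and \[ F_i=R^{a_i}(-t-i)\oplus R^{a_{c-i}}(-s+t-i)\quad(1\le i\le c-1),\qquad a_i=\binom{c+t-1}{i+t}\binom{t-1+i}{t}. \] Then the Boij–Söderberg decomposition of $R/I$ is \[ \beta(R/I)=a\cdot[\pi_{\sigma_1}+\pi_{\sigma_c}]+b\cdot\sum_{j=2}^{c-1}\pi_{\sigma_j}, \] where $a=(s+1-t)\frac{(t+c-1)!}{t!}$, $b=(s+1-2t)\frac{(t+c-1)!}{t!}$, and $\sigma_j=(0,d_{j,1},\dots,d_{j,c-1},s+c)$ with $d_{j,k}=t+k$ for $1\le k\le c-j$ and $d_{j,k}=s-t+k$ for $c-j+1\le k\le c-1$.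
   Context: Betti table $\beta(M)=(\beta_{i,j}(M))$, $\beta_{i,j}(M)=\dim_K[\operatorname{Tor}^R_i(M,K)]_j$. For a strictly increasing sequence $\sigma=(d_0,\dots,d_c)$, the pure diagram $\pi_\sigma$ has entries $\beta_{i,j}=\prod_{l\ne i}\frac1{|d_i-d_l|}$ if $j=d_i$ and $0$ otherwise. The Boij–Söderberg decomposition is the unique expression of the Betti table as a positive integer combination of a chain of pure diagrams $\pi_{\sigma_1}<\dots<\pi_{\sigma_t}$, where $\pi_{(d_0,\dots,d_s)}\le\pi_{(d'_0,\dots,d'_{s'})}$ iff $s\ge s'$ and $d_i\le d'_i$ for $i\le s'$. *)

theory Defs
  imports Complex_Main "HOL-Library.Multiset"
begin

text \<open>Betti tables are functions nat \<Rightarrow> int \<Rightarrow> _ : homological degree i, internal degree j.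
A degree sequence sigma = (d_0,...,d_c) is an int list of length c+1.\<close>

definition pure_diagram :: "int list \<Rightarrow> nat \<Rightarrow> int \<Rightarrow> rat" where
  "pure_diagram \<sigma> i j =
     (if i < length \<sigma> \<and> j = \<sigma> ! i
      then (\<Prod>l \<in> {0..<length \<sigma>} - {i}. 1 / of_int \<bar>\<sigma> ! i - \<sigma> ! l\<bar>)
      else 0)"

definition pd_le :: "int list \<Rightarrow> int list \<Rightarrow> bool" where
  "pd_le \<sigma> \<sigma>' \<longleftrightarrow> length \<sigma>' \<le> length \<sigma> \<and> (\<forall>i < length \<sigma>'. \<sigma> ! i \<le> \<sigma>' ! i)"

definition gor_a :: "nat \<Rightarrow> nat \<Rightarrow> nat \<Rightarrow> nat" where
  "gor_a c t i = ((c + t - 1) choose (i + t)) * ((t - 1 + i) choose t)"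

definition gor_sigma :: "nat \<Rightarrow> nat \<Rightarrow> nat \<Rightarrow> nat \<Rightarrow> int list" where
  "gor_sigma s t c j =
     [0] @ map (\<lambda>k. if k \<le> c - j then int t + int k else int s - int t + int k) [1..<c]
         @ [int s + int c]"

end

theory Submission
  imports Defs
begin

lemma prod_inc_aux:
  assumes "x < a"
  shows "(\<Prod>l\<in>{a..<a+n}. (of_nat (w + l - x)::rat)) = fact (w + (a+n) - Suc x) / fact (w + a - Suc x)"
proof (induction n)
  case 0 then show ?case by simp
next
  case (Suc n)
  have e: "w + (a + Suc n) - Suc x = Suc (w + (a+n) - Suc x)" using assms by simp
  have e2: "Suc (w + (a+n) - Suc x) = w + (a+n) - x" using assms by simp
  have "fact (w + (a + Suc n) - Suc x) = (of_nat (Suc (w + (a+n) - Suc x))::rat) * fact (w + (a+n) - Suc x)"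
    by (simp only: e fact_Suc)
  also have "(of_nat (Suc (w + (a+n) - Suc x))::rat) = of_nat (w + (a+n) - x)" by (simp only: e2)
  finally have "fact (w + (a + Suc n) - Suc x) = (of_nat (w + (a+n) - x)::rat) * fact (w + (a+n) - Suc x)" .
  moreover have "fact (w + a - Suc x) \<noteq> (0::rat)" by simp
  ultimately show ?case using Suc by (simp add: prod.atLeastLessThan_Suc field_simps del: of_nat_diff)
qed

lemma prod_inc:
  assumes "x < a" "a \<le> b"
  shows "(\<Prod>l\<in>{a..<b}. (of_nat (w + l - x)::rat)) = fact (w + b - Suc x) / fact (w + a - Suc x)"
proof -
  obtain n where "b = a + n" using assms le_Suc_ex by blast
  then show ?thesis using prod_inc_aux[OF assms(1)] by simp
qed

lemma prod_dec_aux: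
  assumes "a + n \<le> y"
  shows "(\<Prod>l\<in>{a..<a+n}. (of_nat (w + y - l)::rat)) = fact (w + y - a) / fact (w + y - (a+n))"
  using assms
proof (induction n)
  case 0 then show ?case by simp
next
  case (Suc n)
  have e: "w + y - (a+n) = Suc (w + y - (a + Suc n))" using Suc by simp
  have "fact (w + y - (a+n)) = (of_nat (w + y - (a+n))::rat) * fact (w + y - (a + Suc n))"
    by (subst (1) e, subst fact_Suc, subst e[symmetric]) simp
  moreover have "fact (w + y - (a + Suc n)) \<noteq> (0::rat)" by simp
  ultimately show ?case using Suc by (simp add: prod.atLeastLessThan_Suc field_simps del: of_nat_diff)
qed

lemma prod_dec:
  assumes "a \<le> b" "b \<le> y"
  shows "(\<Prod>l\<in>{a..<b}. (of_nat (w + y - l)::rat)) = fact (w + y - a) / fact (w + y - b)"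
proof -
  obtain n where "b = a + n" using assms le_Suc_ex by blast
  then show ?thesis using prod_dec_aux[of a n y w] assms by simp
qed

lemma gs_len: "0 < c \<Longrightarrow> length (gor_sigma s t c j) = Suc c"
  by (simp add: gor_sigma_def)

lemma gs_nth:
  assumes "0 < c" "l \<le> c"
  shows "gor_sigma s t c j ! l = (if l = 0 then 0 else if l = c then int s + int c
          else if l \<le> c - j then int t + int l else int s - int t + int l)"
proof -
  consider "l = 0" | "l = c" | "0 < l" "l < c" using assms by linarith
  then show ?thesis
  proof cases
    case 1 then show ?thesis by (simp add: gor_sigma_def)
  next
    case 2 then show ?thesis using assms by (simp add: gor_sigma_def nth_append)
  next
    case 3
    then obtain m where m: "l = Suc m" by (cases l) auto
    have "m < c - 1" using 3 m by simp
    then show ?thesis using 3 m by (simp add: gor_sigma_def nth_append)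
  qed
qed

lemma pd_eq:
  assumes "0 < c"
  shows "pure_diagram (gor_sigma s t c j) i x =
    (if i \<le> c \<and> x = gor_sigma s t c j ! i then
       1 / (\<Prod>l\<in>{0..<Suc c} - {i}. (of_int \<bar>gor_sigma s t c j ! i - gor_sigma s t c j ! l\<bar> :: rat))
     else 0)"
  using assms by (simp add: pure_diagram_def gs_len prod_dividef less_Suc_eq_le)

lemma split_prod:
  assumes "i \<le> c"
  shows "(\<Prod>l\<in>{0..<Suc c} - {i}. (g l :: rat)) = (\<Prod>l\<in>{0..<i}. g l) * (\<Prod>l\<in>{Suc i..<Suc c}. g l)"
proof -
  have "{0..<Suc c} - {i} = {0..<i} \<union> {Suc i..<Suc c}" using assms by auto
  then show ?thesis by (simp add: prod.union_disjoint)
qed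

lemma prod_abs_conv:
  assumes "\<And>l. l \<in> A \<Longrightarrow> \<bar>f l\<bar> = int (g l)"
  shows "(\<Prod>l\<in>A. (of_int \<bar>f l\<bar> :: rat)) = (\<Prod>l\<in>A. of_nat (g l))"
  using assms by (intro prod.cong) auto

lemma low_val:
  assumes c: "i < c" "1 \<le> i" "1 \<le> k" "k \<le> c - i" and s: "s = 2*t+u"
  defines "E \<equiv> (!) (gor_sigma s t c k)"
  shows "(\<Prod>l\<in>{0..<Suc c}-{i}. (of_int \<bar>E i - E l\<bar> :: rat)) =
     of_nat (t+i) * fact (i-1) * fact (c-k-i) * (fact (u+c-Suc i)/fact (u+c-k-i)) * of_nat (t+u+c-i)"
proof -
  define n where "n = c - k"
  have n: "i \<le> n" "Suc n \<le> c" using c by (auto simp: n_def)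
  have "i \<le> c - k" using c by arith
  then have Ei: "E i = int t + int i" using c by (simp add: E_def gs_nth)
  define g where "g = (\<lambda>l. of_int \<bar>E i - E l\<bar> :: rat)"
  have P1: "prod g {0..<i} = of_nat (t+i) * fact (i-1)"
  proof -
    have "(\<Prod>l\<in>{0..<i}. (of_int \<bar>E i - E l\<bar> :: rat)) =
       (\<Prod>l\<in>{0..<1}. (of_int \<bar>E i - E l\<bar> :: rat)) * (\<Prod>l\<in>{1..<i}. (of_int \<bar>E i - E l\<bar> :: rat))"
      by (rule prod.atLeastLessThan_concat[symmetric]) (use c in auto)
    also have "(\<Prod>l\<in>{1..<i}. (of_int \<bar>E i - E l\<bar> :: rat)) = (\<Prod>l\<in>{1..<i}. of_nat (0 + i - l))"
      using c by (intro prod_abs_conv) (auto simp: E_def gs_nth Ei)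
    also have "\<dots> = fact (i - 1)" using prod_dec[of 1 i i 0] c by simp
    moreover have "E 0 = 0" using c by (simp add: E_def gs_nth)
    ultimately show ?thesis using Ei by (simp add: g_def)
  qed
  have P2: "prod g {Suc i..<Suc n} = fact (c-k-i)"
  proof -
    have "(\<Prod>l\<in>{Suc i..<Suc n}. (of_int \<bar>E i - E l\<bar> :: rat)) = (\<Prod>l\<in>{Suc i..<Suc n}. of_nat (0 + l - i))"
      using c n by (intro prod_abs_conv) (auto simp: E_def gs_nth Ei n_def)
    also have "\<dots> = fact (c-k-i)" using prod_inc[of i "Suc i" "Suc n" 0] n by (simp add: n_def)
    finally show ?thesis by (simp only: g_def)
  qed
  have P3: "prod g {Suc n..<c} = fact (u+c-Suc i)/fact (u+c-k-i)"
  proof -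
    have "(\<Prod>l\<in>{Suc n..<c}. (of_int \<bar>E i - E l\<bar> :: rat)) = (\<Prod>l\<in>{Suc n..<c}. of_nat (u + l - i))"
      using c n by (intro prod_abs_conv) (auto simp: E_def gs_nth Ei n_def s)
    also have "\<dots> = fact (u+c-Suc i)/fact (u+c-k-i)" using prod_inc[of i "Suc n" c u] n c by (simp add: n_def)
    finally show ?thesis by (simp only: g_def)
  qed
  have P4: "prod g {c..<Suc c} = of_nat (t+u+c-i)"
  proof -
    have Ec: "E c = int s + int c" using c by (simp add: E_def gs_nth)
    have "\<bar>E i - E c\<bar> = int (t+u+c-i)" using c by (simp add: Ei Ec s)
    then show ?thesis by (simp add: g_def)
  qed
  have "prod g {Suc i..<Suc c} = prod g {Suc i..<Suc n} * prod g {Suc n..<c} * prod g {c..<Suc c}"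
    using prod.atLeastLessThan_concat[of "Suc i" "Suc n" c g] prod.atLeastLessThan_concat[of "Suc i" c "Suc c" g] n c
    by simp
  moreover have "prod g ({0..<Suc c}-{i}) = prod g {0..<i} * prod g {Suc i..<Suc c}"
    by (rule split_prod) (use c in simp)
  ultimately have "prod g ({0..<Suc c}-{i}) = of_nat (t+i) * fact (i-1) * fact (c-k-i) * (fact (u+c-Suc i)/fact (u+c-k-i)) * of_nat (t+u+c-i)"
    using P1 P2 P3 P4 by (simp only: mult.assoc)
  then show ?thesis by (simp only: g_def)
qed

lemma high_val:
  assumes c: "i < c" "1 \<le> i" "c - i < k" "k \<le> c" and s: "s = 2*t+u"
  defines "E \<equiv> (!) (gor_sigma s t c k)"
  shows "(\<Prod>l\<in>{0..<Suc c}-{i}. (of_int \<bar>E i - E l\<bar> :: rat)) =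
     of_nat (t+u+i) * (fact (u+i-1)/fact (u+i-Suc (c-k))) * fact (i - Suc (c-k)) * fact (c - Suc i) * of_nat (t+c-i)"
proof -
  define n where "n = c - k"
  have n: "n < i" "Suc n \<le> c" using c by (auto simp: n_def)
  have "\<not> i \<le> c - k" using c by arith
  then have Ei: "E i = int t + int u + int i" using c by (simp add: E_def gs_nth s)
  define g where "g = (\<lambda>l. of_int \<bar>E i - E l\<bar> :: rat)"
  have P0: "prod g {0..<1} = of_nat (t+u+i)"
  proof -
    have "E 0 = 0" using c by (simp add: E_def gs_nth)
    then show ?thesis using Ei by (simp add: g_def)
  qed
  have P1: "prod g {1..<Suc n} = fact (u+i-1)/fact (u+i-Suc n)"
  proof -
    have "(\<Prod>l\<in>{1..<Suc n}. (of_int \<bar>E i - E l\<bar> :: rat)) = (\<Prod>l\<in>{1..<Suc n}. of_nat (u + i - l))"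
      using c n by (intro prod_abs_conv) (auto simp: E_def gs_nth Ei n_def s)
    also have "\<dots> = fact (u+i-1)/fact (u+i-Suc n)" using prod_dec[of 1 "Suc n" i u] n by simp
    finally show ?thesis by (simp only: g_def)
  qed
  have P2: "prod g {Suc n..<i} = fact (i - Suc n)"
  proof -
    have "(\<Prod>l\<in>{Suc n..<i}. (of_int \<bar>E i - E l\<bar> :: rat)) = (\<Prod>l\<in>{Suc n..<i}. of_nat (0 + i - l))"
      using c n by (intro prod_abs_conv) (auto simp: E_def gs_nth Ei n_def s)
    also have "\<dots> = fact (i - Suc n)" using prod_dec[of "Suc n" i i 0] n by simp
    finally show ?thesis by (simp only: g_def)
  qed
  have P3: "prod g {Suc i..<c} = fact (c - Suc i)"
  proof -
    have "(\<Prod>l\<in>{Suc i..<c}. (of_int \<bar>E i - E l\<bar> :: rat)) = (\<Prod>l\<in>{Suc i..<c}. of_nat (0 + l - i))"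
      using c n by (intro prod_abs_conv) (auto simp: E_def gs_nth Ei n_def s)
    also have "\<dots> = fact (c - Suc i)" using prod_inc[of i "Suc i" c 0] c by simp
    finally show ?thesis by (simp only: g_def)
  qed
  have P4: "prod g {c..<Suc c} = of_nat (t+c-i)"
  proof -
    have Ec: "E c = int s + int c" using c by (simp add: E_def gs_nth)
    have "\<bar>E i - E c\<bar> = int (t+c-i)" using c by (simp add: Ei Ec s)
    then show ?thesis by (simp add: g_def)
  qed
  have "prod g {Suc i..<Suc c} = prod g {Suc i..<c} * prod g {c..<Suc c}"
    using prod.atLeastLessThan_concat[of "Suc i" c "Suc c" g] c by simp
  moreover have "prod g {0..<i} = prod g {0..<1} * prod g {1..<Suc n} * prod g {Suc n..<i}"
    using prod.atLeastLessThan_concat[of 0 1 "Suc n" g] prod.atLeastLessThan_concat[of 0 "Suc n" i g] n by simp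
  moreover have "prod g ({0..<Suc c}-{i}) = prod g {0..<i} * prod g {Suc i..<Suc c}"
    by (rule split_prod) (use c in simp)
  ultimately have "prod g ({0..<Suc c}-{i}) = of_nat (t+u+i) * (fact (u+i-1)/fact (u+i-Suc n)) * fact (i - Suc n) * fact (c - Suc i) * of_nat (t+c-i)"
    using P0 P1 P2 P3 P4 by (simp only: mult.assoc)
  then show ?thesis by (simp only: g_def n_def)
qed

lemma zero_val:
  assumes c: "0 < c" "1 \<le> k" "k \<le> c" and s: "s = 2*t+u"
  defines "E \<equiv> (!) (gor_sigma s t c k)"
  shows "(\<Prod>l\<in>{0..<Suc c}-{0}. (of_int \<bar>E 0 - E l\<bar> :: rat)) =
     (fact (t + (c-k)) / fact t) * (fact (t+u+c-1)/fact (t+u+(c-k))) * of_nat (2*t+u+c)"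
proof -
  define n where "n = c - k"
  have n: "Suc n \<le> c" using c by (auto simp: n_def)
  have E0: "E 0 = 0" using c by (simp add: E_def gs_nth)
  define g where "g = (\<lambda>l. of_int \<bar>E 0 - E l\<bar> :: rat)"
  have P1: "prod g {1..<Suc n} = fact (t+n)/fact t"
  proof -
    have "(\<Prod>l\<in>{1..<Suc n}. (of_int \<bar>E 0 - E l\<bar> :: rat)) = (\<Prod>l\<in>{1..<Suc n}. of_nat (t + l - 0))"
      using c n by (intro prod_abs_conv) (auto simp: E_def gs_nth n_def)
    also have "\<dots> = fact (t+n)/fact t" using prod_inc[of 0 1 "Suc n" t] n by simp
    finally show ?thesis by (simp only: g_def)
  qed
  have P2: "prod g {Suc n..<c} = fact (t+u+c-1)/fact (t+u+n)"
  proof -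
    have "(\<Prod>l\<in>{Suc n..<c}. (of_int \<bar>E 0 - E l\<bar> :: rat)) = (\<Prod>l\<in>{Suc n..<c}. of_nat ((t+u) + l - 0))"
      using c n by (intro prod_abs_conv) (auto simp: E_def gs_nth n_def s)
    also have "\<dots> = fact (t+u+c-1)/fact (t+u+n)" using prod_inc[of 0 "Suc n" c "t+u"] n by simp
    finally show ?thesis by (simp only: g_def)
  qed
  have P4: "prod g {c..<Suc c} = of_nat (2*t+u+c)"
  proof -
    have Ec: "E c = int s + int c" using c by (simp add: E_def gs_nth)
    then show ?thesis using E0 s by (simp add: g_def)
  qed
  have "prod g {Suc 0..<Suc c} = prod g {1..<Suc n} * prod g {Suc n..<c} * prod g {c..<Suc c}"
    using prod.atLeastLessThan_concat[of 1 "Suc n" c g] prod.atLeastLessThan_concat[of 1 c "Suc c" g] n c by simp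
  moreover have "prod g ({0..<Suc c}-{0}) = prod g {0..<0} * prod g {Suc 0..<Suc c}"
    by (rule split_prod) simp
  ultimately have "prod g ({0..<Suc c}-{0}) = (fact (t + n) / fact t) * (fact (t+u+c-1)/fact (t+u+n)) * of_nat (2*t+u+c)"
    using P1 P2 P4 by simp
  then show ?thesis by (simp only: g_def n_def)
qed

lemma top_val:
  assumes c: "0 < c" "1 \<le> k" "k \<le> c" and s: "s = 2*t+u"
  defines "E \<equiv> (!) (gor_sigma s t c k)"
  shows "(\<Prod>l\<in>{0..<Suc c}-{c}. (of_int \<bar>E c - E l\<bar> :: rat)) =
     of_nat (2*t+u+c) * (fact (t+u+c-1)/fact (t+u+c-Suc (c-k))) * (fact (t+c-Suc (c-k)) / fact t)"
proof -
  define n where "n = c - k"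
  have n: "Suc n \<le> c" using c by (auto simp: n_def)
  have Ec: "E c = int (2*t+u+c)" using c by (simp add: E_def gs_nth s)
  define g where "g = (\<lambda>l. of_int \<bar>E c - E l\<bar> :: rat)"
  have P0: "prod g {0..<1} = of_nat (2*t+u+c)"
  proof -
    have "E 0 = 0" using c by (simp add: E_def gs_nth)
    then show ?thesis using Ec by (simp add: g_def)
  qed
  have P1: "prod g {1..<Suc n} = fact (t+u+c-1)/fact (t+u+c-Suc n)"
  proof -
    have "(\<Prod>l\<in>{1..<Suc n}. (of_int \<bar>E c - E l\<bar> :: rat)) = (\<Prod>l\<in>{1..<Suc n}. of_nat ((t+u) + c - l))"
      using c n by (intro prod_abs_conv) (auto simp: E_def gs_nth n_def s)
    also have "\<dots> = fact (t+u+c-1)/fact (t+u+c-Suc n)" using prod_dec[of 1 "Suc n" c "t+u"] n by simp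
    finally show ?thesis by (simp only: g_def)
  qed
  have P2: "prod g {Suc n..<c} = fact (t+c-Suc n)/fact t"
  proof -
    have "(\<Prod>l\<in>{Suc n..<c}. (of_int \<bar>E c - E l\<bar> :: rat)) = (\<Prod>l\<in>{Suc n..<c}. of_nat (t + c - l))"
      using c n by (intro prod_abs_conv) (auto simp: E_def gs_nth n_def s)
    also have "\<dots> = fact (t+c-Suc n)/fact t" using prod_dec[of "Suc n" c c t] n by simp
    finally show ?thesis by (simp only: g_def)
  qed
  have "prod g {0..<c} = prod g {0..<1} * prod g {1..<Suc n} * prod g {Suc n..<c}"
    using prod.atLeastLessThan_concat[of 0 1 "Suc n" g] prod.atLeastLessThan_concat[of 0 "Suc n" c g] n by simp
  moreover have "prod g ({0..<Suc c}-{c}) = prod g {0..<c} * prod g {Suc c..<Suc c}"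
    by (rule split_prod) simp
  ultimately have "prod g ({0..<Suc c}-{c}) = of_nat (2*t+u+c) * (fact (t+u+c-1)/fact (t+u+c-Suc n)) * (fact (t+c-Suc n) / fact t)"
    using P0 P1 P2 by simp
  then show ?thesis by (simp only: g_def n_def)
qed

lemma alg1:
  fixes U Q F G :: rat assumes "U \<ge> 0" "Q \<ge> 0" "G \<noteq> 0"
  shows "(U+Q+1)/(U+1)*(F/G) + (U+Q+1)*F/((Q+1)*G) = (U+(Q+1)+1)/(U+1)*((U+Q+1)*F/((Q+1)*G))"
proof -
  have u: "U+1 \<noteq> 0" and q: "Q+1 \<noteq> 0" using assms by auto
  have "(U+Q+1)/(U+1)*(F/G) + (U+Q+1)*F/((Q+1)*G) = ((U+Q+1)*F) * (1/((U+1)*G) + 1/((Q+1)*G))" by (simp add: field_simps)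
  also have "1/((U+1)*G) + 1/((Q+1)*G) = (U+Q+2)/((U+1)*(Q+1)*G)"
    using u q assms by (simp add: divide_simps)
  finally show ?thesis by (simp add: field_simps)
qed

lemma S1: "(\<Sum>k=0..q. (fact (u+k) / fact k :: rat)) = (of_nat u + of_nat q + 1) / (of_nat u + 1) * (fact (u+q) / fact q)"
proof (induction q)
  case 0 then show ?case by simp
next
  case (Suc q)
  have a: "fact (u+Suc q) = (of_nat u + of_nat q + 1) * (fact (u+q) :: rat)" by (simp add: fact_Suc)
  have b: "fact (Suc q) = (of_nat q + 1) * (fact q :: rat)" by (simp add: fact_Suc)
  have "(\<Sum>k=0..Suc q. (fact (u+k) / fact k :: rat)) = (of_nat u + of_nat q + 1) / (of_nat u + 1) * (fact (u+q) / fact q)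
        + fact (u + Suc q) / fact (Suc q)" using Suc by simp
  also have "\<dots> = (of_nat u + (of_nat q + 1) + 1) / (of_nat u + 1) * (fact (u+Suc q) / fact (Suc q))"
    unfolding a b by (rule alg1) auto
  finally show ?case by simp
qed

lemma alg3:
  fixes T U Q F G :: rat assumes "T \<ge> 0" "U \<ge> 0" "Q \<ge> 0" "G \<noteq> 0"
  shows "F/G - T*Z/H + (U+1)*(F/((T+Q+1)*G)) = (T+U+Q+2)*F/((T+Q+1)*G) - T*Z/H"
proof -
  have q: "T+Q+1 \<noteq> 0" using assms by auto
  have "F/G + (U+1)*(F/((T+Q+1)*G)) = (T+U+Q+2)*F/((T+Q+1)*G)"
    using q assms by (simp add: divide_simps) (simp add: algebra_simps)
  then show ?thesis by simp
qed

lemma S3: "(of_nat u + 1) * (\<Sum>m=0..Q. (fact (t+u+m) / fact (t+m) :: rat))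
   = fact (t+u+Q+1) / fact (t+Q) - of_nat t * fact (t+u) / fact t"
proof (induction Q)
  case 0
  have "fact (t+u+1) = (of_nat t + of_nat u + 1 :: rat) * fact (t+u)" by (simp add: fact_Suc)
  then show ?case by (simp add: field_simps)
next
  case (Suc Q)
  have a: "fact (t+u+Suc Q+1) = (of_nat t + of_nat u + of_nat Q + 2 :: rat) * fact (t+u+Q+1)"
    by (simp add: fact_Suc)
  have b: "fact (t+Suc Q) = (of_nat t + of_nat Q + 1 :: rat) * fact (t+Q)" by (simp add: fact_Suc)
  have c: "fact (t+u+Suc Q) = (fact (t+u+Q+1) :: rat)" by simp
  have "(of_nat u + 1) * (\<Sum>m=0..Suc Q. (fact (t+u+m) / fact (t+m) :: rat)) =
     fact (t+u+Q+1) / fact (t+Q) - of_nat t * fact (t+u) / fact t + (of_nat u + 1) * (fact (t+u+Suc Q) / fact (t+Suc Q))"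
    using Suc by (simp add: distrib_left)
  also have "\<dots> = fact (t+u+Suc Q+1) / fact (t+Suc Q) - of_nat t * fact (t+u) / fact t"
    unfolding a b c by (rule alg3) auto
  finally show ?case .
qed

lemma sum_delta_q: "(\<Sum>m=0..(q::nat). (if m = q then (g m :: rat) else 0)) = g q"
  using sum.delta[of "{0..q}" q g] by simp

lemma sum_delta_0: "(\<Sum>m=0..(q::nat). (if m = 0 then (g m :: rat) else 0)) = g 0"
  using sum.delta[of "{0..q}" 0 g] by simp

lemma sum_last: "(\<Sum>m=0..(q::nat). (if m = q then A else B) * (f m :: rat)) = B * (\<Sum>m=0..q. f m) + (A - B) * f q"
proof -
  have "(\<Sum>m=0..q. (if m = q then A else B) * (f m :: rat)) = (\<Sum>m=0..q. B * f m + (if m = q then (A-B) * f m else 0))"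
    by (intro sum.cong) (auto simp: algebra_simps)
  also have "\<dots> = B * (\<Sum>m=0..q. f m) + (\<Sum>m=0..q. (if m = q then (A-B) * f m else 0))"
    by (simp add: sum.distrib sum_distrib_left)
  also have "(\<Sum>m=0..q. (if m = q then (A-B) * f m else 0)) = (A - B) * f q"
    by (rule sum_delta_q)
  finally show ?thesis .
qed

lemma sum_ends: assumes "0 < (Q::nat)"
  shows "(\<Sum>m=0..Q. (if m = 0 \<or> m = Q then A else B) * (f m :: rat)) = B * (\<Sum>m=0..Q. f m) + (A - B) * (f 0 + f Q)"
proof -
  have pw: "(if m = 0 \<or> m = Q then A else B) * (f m :: rat) =
     B * f m + ((if m = 0 then (A-B) * f m else 0) + (if m = Q then (A-B) * f m else 0))" for m
    using assms by (cases "m = 0"; cases "m = Q") (auto simp: algebra_simps)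
  have "(\<Sum>m=0..Q. (if m = 0 \<or> m = Q then A else B) * (f m :: rat)) =
      (\<Sum>m=0..Q. B * f m + ((if m = 0 then (A-B) * f m else 0) + (if m = Q then (A-B) * f m else 0)))"
    by (intro sum.cong refl pw)
  also have "\<dots> = B * (\<Sum>m=0..Q. f m) + ((\<Sum>m=0..Q. (if m = 0 then (A-B) * f m else 0)) + (\<Sum>m=0..Q. (if m = Q then (A-B) * f m else 0)))"
    by (simp add: sum.distrib sum_distrib_left)
  also have "\<dots> = B * (\<Sum>m=0..Q. f m) + (A - B) * (f 0 + f Q)"
    unfolding sum_delta_q sum_delta_0 by (simp add: algebra_simps)
  finally show ?thesis .
qed

lemma alg_mid:
  fixes U T K X F G :: rat assumes "U \<ge> 0" "G \<noteq> 0" and h: "(U+1)*X = (U+Q+1)*(F/G)"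
  shows "(U+1)*K*X + ((U+T+1)*K - (U+1)*K) * (F/G) = K*(U+T+Q+1)*F/G"
proof -
  have "(U+1)*K*X = K*((U+1)*X)" by simp
  then show ?thesis unfolding h using assms by (simp add: field_simps)
qed

lemma mid_core:
  "(\<Sum>m=0..q. (if m = q then (of_nat u + of_nat t + 1) * K else (of_nat u + 1) * K) * (fact (u+m) / fact m :: rat))
    = K * (of_nat u + of_nat t + of_nat q + 1) * fact (u+q) / fact q"
proof -
  have h: "(of_nat u + 1) * (\<Sum>m=0..q. (fact (u+m) / fact m :: rat)) = (of_nat u + of_nat q + 1) * (fact (u+q) / fact q)"
  proof -
    have "(of_nat u + 1 :: rat) \<noteq> 0" by (metis of_nat_Suc of_nat_eq_0_iff add.commute nat.distinct(1))
    then show ?thesis unfolding S1 by simp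
  qed
  show ?thesis unfolding sum_last by (rule alg_mid[OF _ _ h]) auto
qed

lemma alg_edge:
  fixes T U Q X F G H Z :: rat assumes "G \<noteq> 0" "H \<noteq> 0"
    and hyp: "(U+1)*X = (T+U+Q+1)*F/G - T*Z/H"
  shows "(U+1)*(G/H)*X + ((U+T+1)*(G/H) - (U+1)*(G/H))*(Z/H + F/G) = F*(2*T+U+Q+1)/H"
proof -
  have "(U+1)*(G/H)*X = (G/H)*((U+1)*X)" by simp
  then show ?thesis unfolding hyp using assms by (simp add: field_simps)
qed

lemma edge_core: assumes "0 < Q"
  shows "(\<Sum>m=0..Q. (if m = 0 \<or> m = Q then (of_nat u + of_nat t + 1) * (fact (t+Q) / fact t) else (of_nat u + 1) * (fact (t+Q) / fact t))
        * (fact (t+u+m) / fact (t+m) :: rat))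
    = fact (t+u+Q) * (2 * of_nat t + of_nat u + of_nat Q + 1) / fact t"
proof -
  have a: "fact (t+u+Q+1) = (of_nat t + of_nat u + of_nat Q + 1 :: rat) * fact (t+u+Q)" by (simp add: fact_Suc)
  have "(of_nat u + 1) * (\<Sum>m=0..Q. (fact (t+u+m) / fact (t+m) :: rat)) = (of_nat t + of_nat u + of_nat Q + 1) * fact (t+u+Q) / fact (t+Q) - of_nat t * fact (t+u) / fact t"
    using S3[of u t Q] unfolding a by simp
  from alg_edge[OF _ _ this] show ?thesis unfolding sum_ends[OF assms] by simp
qed

lemma rev_reindex: "1 \<le> (c::nat) \<Longrightarrow> (\<Sum>k=1..c. (g k :: rat)) = (\<Sum>m=0..c-1. g (c - m))"
  by (rule sum.reindex_bij_witness[where i="\<lambda>m. c-m" and j="\<lambda>k. c-k"]) auto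

lemma shift_reindex: "(\<Sum>k=(a::nat)..a+n. (g k :: rat)) = (\<Sum>m=0..n. g (a + m))"
  by (rule sum.reindex_bij_witness[where i="\<lambda>m. a+m" and j="\<lambda>k. k-a"]) auto

lemma alg_inv1: "(1::rat) / ((a/b)*(d/e)*f) = (e/a) * (b/(d*f))"
  by (simp add: divide_inverse inverse_mult_distrib mult_ac)

lemma alg_inv2: "(1::rat) / (f*(d/e)*(a/b)) = (e/a) * (b/(d*f))"
  by (simp add: divide_inverse inverse_mult_distrib mult_ac)

lemma edge0:
  assumes c: "2 \<le> c" and s: "s = 2*t+u" and K: "K = fact (t+c-1) / fact t"
  shows "(\<Sum>k=1..c. (if k = 1 \<or> k = c then (of_nat u + of_nat t + 1) * K else (of_nat u + 1) * K)
            * pure_diagram (gor_sigma s t c k) 0 0) = 1"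
proof -
  define Q where "Q = c - 1"
  have Q: "0 < Q" "c = Suc Q" using c by (auto simp: Q_def)
  define Cst where "Cst = fact t / (fact (t+u+Q) * (of_nat (2*t+u+c)::rat))"
  have tm: "(if c - m = 1 \<or> c - m = c then (of_nat u + of_nat t + 1) * K else (of_nat u + 1) * K)
            * pure_diagram (gor_sigma s t c (c - m)) 0 0 =
       (if m = 0 \<or> m = Q then (of_nat u + of_nat t + 1) * (fact (t+Q) / fact t) else (of_nat u + 1) * (fact (t+Q) / fact t))
        * (fact (t+u+m) / fact (t+m)) * Cst" if m: "m \<in> {0..c-1}" for m
  proof -
    have m': "m \<le> Q" using m Q by auto
    have E0: "gor_sigma s t c (c-m) ! 0 = 0" using c by (simp add: gs_nth)
    have pd: "pure_diagram (gor_sigma s t c (c - m)) 0 0 =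
       1 / ((fact (t + (c-(c-m))) / fact t) * (fact (t+u+c-1)/fact (t+u+(c-(c-m)))) * of_nat (2*t+u+c))"
      using pd_eq[of c s t "c-m" 0 0] zero_val[of c "c-m" s t u] c s m' Q E0 by simp
    have cc: "c - (c - m) = m" "t+u+c-1 = t+u+Q" "t+c-1 = t+Q" using Q m' by auto
    have co: "(c - m = 1 \<or> c - m = c) \<longleftrightarrow> (m = 0 \<or> m = Q)" using Q m' by auto
    show ?thesis unfolding pd cc co alg_inv1 Cst_def K by (simp add: mult_ac)
  qed
  have "(\<Sum>k=1..c. (if k = 1 \<or> k = c then (of_nat u + of_nat t + 1) * K else (of_nat u + 1) * K)
            * pure_diagram (gor_sigma s t c k) 0 0) =
     (\<Sum>m=0..Q. (if m = 0 \<or> m = Q then (of_nat u + of_nat t + 1) * (fact (t+Q) / fact t) else (of_nat u + 1) * (fact (t+Q) / fact t))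
        * (fact (t+u+m) / fact (t+m)) * Cst)"
    using c tm by (subst rev_reindex) (auto simp: Q_def intro!: sum.cong)
  also have "\<dots> = fact (t+u+Q) * (2 * of_nat t + of_nat u + of_nat Q + 1) / fact t * Cst"
    unfolding sum_distrib_right[symmetric] edge_core[OF Q(1)] ..
  also have "\<dots> = 1"
  proof -
    have e: "(of_nat (2*t+u+c) :: rat) = 2 * of_nat t + of_nat u + of_nat Q + 1" using Q by simp
    have p: "(0::rat) < 2 * of_nat t + of_nat u + of_nat Q + 1" by (simp add: add_pos_nonneg)
    have f: "fact (t+u+Q) \<noteq> (0::rat)" "fact t \<noteq> (0::rat)" by simp_all
    show ?thesis unfolding Cst_def e using p f by (simp add: divide_simps)
  qed
  finally show ?thesis .
qed

lemma edgeC: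
  assumes c: "2 \<le> c" and s: "s = 2*t+u" and K: "K = fact (t+c-1) / fact t"
  shows "(\<Sum>k=1..c. (if k = 1 \<or> k = c then (of_nat u + of_nat t + 1) * K else (of_nat u + 1) * K)
            * pure_diagram (gor_sigma s t c k) c (int s + int c)) = 1"
proof -
  define Q where "Q = c - 1"
  have Q: "0 < Q" "c = Suc Q" using c by (auto simp: Q_def)
  define Cst where "Cst = fact t / (fact (t+u+Q) * (of_nat (2*t+u+c)::rat))"
  have tm: "(if 1 + m = 1 \<or> 1 + m = c then (of_nat u + of_nat t + 1) * K else (of_nat u + 1) * K)
            * pure_diagram (gor_sigma s t c (1 + m)) c (int s + int c) =
       (if m = 0 \<or> m = Q then (of_nat u + of_nat t + 1) * (fact (t+Q) / fact t) else (of_nat u + 1) * (fact (t+Q) / fact t))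
        * (fact (t+u+m) / fact (t+m)) * Cst" if m: "m \<in> {0..Q}" for m
  proof -
    have m': "m \<le> Q" using m Q by auto
    have Ec: "gor_sigma s t c (1+m) ! c = int s + int c" using c by (simp add: gs_nth)
    have pd: "pure_diagram (gor_sigma s t c (1+m)) c (int s + int c) =
       1 / (of_nat (2*t+u+c) * (fact (t+u+c-1)/fact (t+u+c-Suc (c-(1+m)))) * (fact (t+c-Suc (c-(1+m))) / fact t))"
      using pd_eq[of c s t "1+m" c "int s + int c"] top_val[of c "1+m" s t u] c s m' Q Ec by simp
    have cc: "t+u+c-Suc (c-(1+m)) = t+u+m" "t+c-Suc (c-(1+m)) = t+m" "t+u+c-1 = t+u+Q" "t+c-1 = t+Q" using Q m' by auto
    have co: "(1 + m = 1 \<or> 1 + m = c) \<longleftrightarrow> (m = 0 \<or> m = Q)" using Q m' by auto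
    show ?thesis unfolding pd cc co alg_inv2 Cst_def K by (simp add: mult_ac)
  qed
  have r: "(\<Sum>k=1..c. (if k = 1 \<or> k = c then (of_nat u + of_nat t + 1) * K else (of_nat u + 1) * K)
            * pure_diagram (gor_sigma s t c k) c (int s + int c)) =
     (\<Sum>m=0..Q. (if 1 + m = 1 \<or> 1 + m = c then (of_nat u + of_nat t + 1) * K else (of_nat u + 1) * K)
            * pure_diagram (gor_sigma s t c (1 + m)) c (int s + int c))"
  proof -
    have eq: "{1..c} = {1..1+Q}" using Q by simp
    show ?thesis by (simp only: eq shift_reindex)
  qed
  have "(\<Sum>k=1..c. (if k = 1 \<or> k = c then (of_nat u + of_nat t + 1) * K else (of_nat u + 1) * K)
            * pure_diagram (gor_sigma s t c k) c (int s + int c)) =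
     (\<Sum>m=0..Q. (if m = 0 \<or> m = Q then (of_nat u + of_nat t + 1) * (fact (t+Q) / fact t) else (of_nat u + 1) * (fact (t+Q) / fact t))
        * (fact (t+u+m) / fact (t+m)) * Cst)"
    unfolding r using tm by (intro sum.cong) auto
  also have "\<dots> = fact (t+u+Q) * (2 * of_nat t + of_nat u + of_nat Q + 1) / fact t * Cst"
    unfolding sum_distrib_right[symmetric] edge_core[OF Q(1)] ..
  also have "\<dots> = 1"
  proof -
    have e: "(of_nat (2*t+u+c) :: rat) = 2 * of_nat t + of_nat u + of_nat Q + 1" using Q by simp
    have p: "(0::rat) < 2 * of_nat t + of_nat u + of_nat Q + 1" by (simp add: add_pos_nonneg)
    have f: "fact (t+u+Q) \<noteq> (0::rat)" "fact t \<noteq> (0::rat)" by simp_all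
    show ?thesis unfolding Cst_def e using p f by (simp add: divide_simps)
  qed
  finally show ?thesis .
qed

lemma gor_a_val:
  assumes "1 \<le> i" "i < c" "0 < t"
  shows "(of_nat (gor_a c t i) :: rat) = (fact (t+c-1) / fact t) / (of_nat (t+i) * fact (i-1) * fact (c-1-i))"
proof -
  have b1: "(of_nat ((c+t-1) choose (i+t)) :: rat) = fact (t+c-1) / (fact (i+t) * fact (c-1-i))"
  proof -
    have h: "i+t \<le> c+t-1" using assms by simp
    have h2: "c+t-1-(i+t) = c-1-i" using assms by simp
    show ?thesis using binomial_fact[OF h] unfolding h2 by (simp add: add.commute)
  qed
  have b2: "(of_nat ((t-1+i) choose t) :: rat) = fact (t-1+i) / (fact t * fact (i-1))"
  proof -
    have h: "t \<le> t-1+i" using assms by simp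
    have h2: "t-1+i-t = i-1" using assms by simp
    show ?thesis using binomial_fact[OF h] unfolding h2 by simp
  qed
  have f: "(fact (i+t) :: rat) = of_nat (t+i) * fact (t-1+i)"
  proof -
    have "i + t = Suc (t-1+i)" using assms by simp
    then have "(fact (i+t) :: rat) = of_nat (Suc (t-1+i)) * fact (t-1+i)" by (simp only: fact_Suc)
    moreover have "Suc (t-1+i) = t+i" using assms by simp
    ultimately show ?thesis by simp
  qed
  have e: "c+t-1 = t+c-1" by simp
  have nz: "(of_nat (t+i) :: rat) \<noteq> 0" using assms by simp
  have "(of_nat (gor_a c t i) :: rat) = of_nat ((c+t-1) choose (i+t)) * of_nat ((t-1+i) choose t)"
    by (simp add: gor_a_def)
  also have "\<dots> = (fact (t+c-1) / fact t) / (of_nat (t+i) * fact (i-1) * fact (c-1-i))"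
    unfolding b1 b2 f using nz by (simp add: divide_simps)
  finally show ?thesis .
qed

lemma alg_inv3: "(1::rat) / (P*I*M*(Y/Z)*W) = (Z/M) * (1/(P*I*Y*W))"
  by (simp add: divide_inverse inverse_mult_distrib mult_ac)

lemma alg_inv4: "(1::rat) / (P*(Y/Z)*M*R*W) = (Z/M) * (1/(P*Y*R*W))"
  by (simp add: divide_inverse inverse_mult_distrib mult_ac)

lemma mid_low:
  assumes i: "1 \<le> i" "i < c" and t: "0 < t" and s: "s = 2*t+u" and K: "K = fact (t+c-1) / fact t"
  shows "(\<Sum>k=1..c-i. (if k = 1 \<or> k = c then (of_nat u + of_nat t + 1) * K else (of_nat u + 1) * K)
            * pure_diagram (gor_sigma s t c k) i (int t + int i)) = of_nat (gor_a c t i)"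
proof -
  define p where "p = c - i"
  define q where "q = p - 1"
  have pq: "1 \<le> p" "p = Suc q" "c = p + i" using i by (auto simp: p_def q_def)
  define D where "D = 1 / (of_nat (t+i) * fact (i-1) * fact (u+q) * (of_nat (t+u+q+1) :: rat))"
  have tm: "(if p - m = 1 \<or> p - m = c then (of_nat u + of_nat t + 1) * K else (of_nat u + 1) * K)
            * pure_diagram (gor_sigma s t c (p - m)) i (int t + int i) =
       (if m = q then (of_nat u + of_nat t + 1) * K else (of_nat u + 1) * K) * (fact (u+m) / fact m) * D"
    if m: "m \<in> {0..p-1}" for m
  proof -
    have m': "m \<le> q" using m pq by auto
    have "i \<le> c - (p-m)" using pq m' by arith
    then have Ei: "gor_sigma s t c (p-m) ! i = int t + int i" using pq m' i by (simp add: gs_nth)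
    have pd: "pure_diagram (gor_sigma s t c (p-m)) i (int t + int i) =
       1 / (of_nat (t+i) * fact (i-1) * fact (c-(p-m)-i) * (fact (u+c-Suc i)/fact (u+c-(p-m)-i)) * of_nat (t+u+c-i))"
      using pd_eq[of c s t "p-m" i "int t + int i"] low_val[of i c "p-m" s t u] i s m' pq Ei by simp
    have cc: "c-(p-m)-i = m" "u+c-(p-m)-i = u+m" "u+c-Suc i = u+q" "t+u+c-i = t+u+q+1" using pq m' by auto
    have co: "(p - m = 1 \<or> p - m = c) \<longleftrightarrow> m = q" using pq m' i by auto
    show ?thesis unfolding pd cc co alg_inv3 D_def by (simp add: mult_ac)
  qed
  have "(\<Sum>k=1..c-i. (if k = 1 \<or> k = c then (of_nat u + of_nat t + 1) * K else (of_nat u + 1) * K)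
            * pure_diagram (gor_sigma s t c k) i (int t + int i)) =
      (\<Sum>m=0..q. (if m = q then (of_nat u + of_nat t + 1) * K else (of_nat u + 1) * K) * (fact (u+m) / fact m) * D)"
  proof -
    have "(\<Sum>k=1..c-i. (if k = 1 \<or> k = c then (of_nat u + of_nat t + 1) * K else (of_nat u + 1) * K)
            * pure_diagram (gor_sigma s t c k) i (int t + int i)) =
      (\<Sum>m=0..p-1. (if p - m = 1 \<or> p - m = c then (of_nat u + of_nat t + 1) * K else (of_nat u + 1) * K)
            * pure_diagram (gor_sigma s t c (p - m)) i (int t + int i))"
      unfolding p_def[symmetric] by (rule rev_reindex[OF pq(1)])
    also have "\<dots> = (\<Sum>m=0..p-1. (if m = q then (of_nat u + of_nat t + 1) * K else (of_nat u + 1) * K) * (fact (u+m) / fact m) * D)"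
      using tm by (rule sum.cong[OF refl])
    also have "{0..p-1} = {0..q}" using pq by simp
    finally show ?thesis .
  qed
  also have "\<dots> = K * (of_nat u + of_nat t + of_nat q + 1) * fact (u+q) / fact q * D"
    unfolding sum_distrib_right[symmetric] mid_core ..
  also have "\<dots> = (fact (t+c-1) / fact t) / (of_nat (t+i) * fact (i-1) * fact (c-1-i))"
  proof -
    have e: "(of_nat (t+u+q+1) :: rat) = of_nat u + of_nat t + of_nat q + 1" by simp
    have p: "(0::rat) < of_nat u + of_nat t + of_nat q + 1" by (simp add: add_pos_nonneg)
    have f: "fact (u+q) \<noteq> (0::rat)" "fact q \<noteq> (0::rat)" "fact (i-1) \<noteq> (0::rat)" "(of_nat (t+i)::rat) \<noteq> 0" using t by simp_all
    have cq: "c-1-i = q" using pq by simp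
    show ?thesis unfolding D_def e cq K using p f by (simp add: divide_simps)
  qed
  also have "\<dots> = of_nat (gor_a c t i)" using gor_a_val[OF i t] by simp
  finally show ?thesis .
qed

lemma mid_high:
  assumes i: "1 \<le> i" "i < c" and t: "0 < t" and s: "s = 2*t+u" and K: "K = fact (t+c-1) / fact t"
  shows "(\<Sum>k=Suc (c-i)..c. (if k = 1 \<or> k = c then (of_nat u + of_nat t + 1) * K else (of_nat u + 1) * K)
            * pure_diagram (gor_sigma s t c k) i (int s - int t + int i)) = of_nat (gor_a c t (c-i))"
proof -
  define p where "p = c - i"
  define q where "q = i - 1"
  have pq: "1 \<le> p" "i = Suc q" "c = p + i" using i by (auto simp: p_def q_def)
  define D where "D = 1 / (of_nat (t+u+i) * fact (u+q) * fact (c - Suc i) * (of_nat (t+c-i) :: rat))"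
  have tm: "(if Suc p + m = 1 \<or> Suc p + m = c then (of_nat u + of_nat t + 1) * K else (of_nat u + 1) * K)
            * pure_diagram (gor_sigma s t c (Suc p + m)) i (int s - int t + int i) =
       (if m = q then (of_nat u + of_nat t + 1) * K else (of_nat u + 1) * K) * (fact (u+m) / fact m) * D"
    if m: "m \<in> {0..q}" for m
  proof -
    have m': "m \<le> q" using m pq by auto
    have "\<not> i \<le> c - (Suc p + m)" using pq m' by arith
    then have Ei: "gor_sigma s t c (Suc p + m) ! i = int s - int t + int i" using pq m' i by (simp add: gs_nth)
    have pd: "pure_diagram (gor_sigma s t c (Suc p + m)) i (int s - int t + int i) =
       1 / (of_nat (t+u+i) * (fact (u+i-1)/fact (u+i-Suc (c-(Suc p + m)))) * fact (i - Suc (c-(Suc p + m))) * fact (c - Suc i) * of_nat (t+c-i))"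
      using pd_eq[of c s t "Suc p + m" i "int s - int t + int i"] high_val[of i c "Suc p + m" s t u] i s m' pq Ei by simp
    have cc: "u+i-Suc (c-(Suc p + m)) = u+m" "i - Suc (c-(Suc p + m)) = m" "u+i-1 = u+q" using pq m' by auto
    have co: "(Suc p + m = 1 \<or> Suc p + m = c) \<longleftrightarrow> m = q" using pq m' by auto
    show ?thesis unfolding pd cc co alg_inv4 D_def by (simp add: mult_ac)
  qed
  have r: "{Suc (c-i)..c} = {Suc p..Suc p + q}"
  proof -
    have r1: "c - i = p" by (simp add: p_def)
    have r2: "c = Suc p + q" using pq(2,3) by simp
    show ?thesis unfolding r1 using r2 by simp
  qed
  have "(\<Sum>k=Suc (c-i)..c. (if k = 1 \<or> k = c then (of_nat u + of_nat t + 1) * K else (of_nat u + 1) * K)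
            * pure_diagram (gor_sigma s t c k) i (int s - int t + int i)) =
      (\<Sum>m=0..q. (if m = q then (of_nat u + of_nat t + 1) * K else (of_nat u + 1) * K) * (fact (u+m) / fact m) * D)"
    unfolding r shift_reindex using tm by (intro sum.cong) auto
  also have "\<dots> = K * (of_nat u + of_nat t + of_nat q + 1) * fact (u+q) / fact q * D"
    unfolding sum_distrib_right[symmetric] mid_core ..
  also have "\<dots> = (fact (t+c-1) / fact t) / (of_nat (t+(c-i)) * fact ((c-i)-1) * fact (c-1-(c-i)))"
  proof -
    have e: "(of_nat (t+u+i) :: rat) = of_nat u + of_nat t + of_nat q + 1" using pq by simp
    have p: "(0::rat) < of_nat u + of_nat t + of_nat q + 1" by (simp add: add_pos_nonneg)
    have f: "fact (u+q) \<noteq> (0::rat)" "fact q \<noteq> (0::rat)" "fact (c - Suc i) \<noteq> (0::rat)" "(of_nat (t+c-i)::rat) \<noteq> 0" using t i by simp_all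
    have cq: "c-1-(c-i) = q" "(c-i)-1 = c - Suc i" "t+(c-i) = t+c-i" using pq by auto
    show ?thesis unfolding D_def e cq K using p f by (simp add: divide_simps)
  qed
  also have "\<dots> = of_nat (gor_a c t (c-i))" using gor_a_val[of "c-i" c t] i t by simp
  finally show ?thesis .
qed

lemma pd_self: "pure_diagram \<sigma> i j = (if j = \<sigma> ! i then pure_diagram \<sigma> i (\<sigma> ! i) else 0)"
  by (simp add: pure_diagram_def)

lemma coef_split:
  assumes "2 \<le> (c::nat)"
  shows "A * (f 1 + f c) + B * (\<Sum>k=2..c-1. f k) = (\<Sum>k=1..c. (if k = 1 \<or> k = c then A else B) * (f k :: rat))"
proof -
  have c: "c = Suc (c-1)" "1 \<le> c" "2 \<le> Suc (c-1)" using assms by auto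
  have "(\<Sum>k=1..c. (if k = 1 \<or> k = c then A else B) * f k) = A * f 1 + (\<Sum>k=2..c. (if k = 1 \<or> k = c then A else B) * f k)"
    using sum.atLeast_Suc_atMost[OF c(2), of "\<lambda>k. (if k = 1 \<or> k = c then A else B) * f k"] assms by (simp add: numeral_2_eq_2)
  also have "(\<Sum>k=2..c. (if k = 1 \<or> k = c then A else B) * f k) = (\<Sum>k=2..c-1. (if k = 1 \<or> k = c then A else B) * f k) + A * f c"
    using sum.cl_ivl_Suc[of "\<lambda>k. (if k = 1 \<or> k = c then A else B) * f k" 2 "c-1"] c by simp
  also have "(\<Sum>k=2..c-1. (if k = 1 \<or> k = c then A else B) * f k) = (\<Sum>k=2..c-1. B * f k)"
    by (intro sum.cong) auto
  finally show ?thesis by (simp add: sum_distrib_left algebra_simps)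
qed

lemma mid_all:
  assumes i: "1 \<le> i" "i < c" and t: "0 < t" and s: "s = 2*t+u" and K: "K = fact (t+c-1) / fact t"
  shows "(\<Sum>k=1..c. (if k = 1 \<or> k = c then (of_nat u + of_nat t + 1) * K else (of_nat u + 1) * K)
            * pure_diagram (gor_sigma s t c k) i j) =
    (if j = int t + int i then of_nat (gor_a c t i) else 0) + (if j = int s - int t + int i then of_nat (gor_a c t (c-i)) else 0)"
proof -
  define co where "co k = (if k = 1 \<or> k = c then (of_nat u + of_nat t + 1) * K else (of_nat u + 1) * (K::rat))" for k
  have split: "{1..c} = {1..c-i} \<union> {Suc (c-i)..c}" using i by auto
  have "(\<Sum>k=1..c. co k * pure_diagram (gor_sigma s t c k) i j) =
      (\<Sum>k=1..c-i. co k * pure_diagram (gor_sigma s t c k) i j) + (\<Sum>k=Suc (c-i)..c. co k * pure_diagram (gor_sigma s t c k) i j)"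
    unfolding split by (rule sum.union_disjoint) auto
  also have "(\<Sum>k=1..c-i. co k * pure_diagram (gor_sigma s t c k) i j) =
     (\<Sum>k=1..c-i. (if j = int t + int i then co k * pure_diagram (gor_sigma s t c k) i (int t + int i) else 0))"
  proof (intro sum.cong refl)
    fix k assume k: "k \<in> {1..c-i}"
    then have "i \<le> c - k" using i by auto
    then have "gor_sigma s t c k ! i = int t + int i" using i by (simp add: gs_nth)
    then show "co k * pure_diagram (gor_sigma s t c k) i j = (if j = int t + int i then co k * pure_diagram (gor_sigma s t c k) i (int t + int i) else 0)"
      by (subst pd_self) simp
  qed
  also have "\<dots> = (if j = int t + int i then of_nat (gor_a c t i) else 0)"
    using mid_low[OF i t s K] unfolding co_def by (cases "j = int t + int i") simp_all
  also have "(\<Sum>k=Suc (c-i)..c. co k * pure_diagram (gor_sigma s t c k) i j) =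
     (\<Sum>k=Suc (c-i)..c. (if j = int s - int t + int i then co k * pure_diagram (gor_sigma s t c k) i (int s - int t + int i) else 0))"
  proof (intro sum.cong refl)
    fix k assume k: "k \<in> {Suc (c-i)..c}"
    then have "\<not> i \<le> c - k" using i by auto
    then have "gor_sigma s t c k ! i = int s - int t + int i" using i by (simp add: gs_nth)
    then show "co k * pure_diagram (gor_sigma s t c k) i j = (if j = int s - int t + int i then co k * pure_diagram (gor_sigma s t c k) i (int s - int t + int i) else 0)"
      by (subst pd_self) simp
  qed
  also have "\<dots> = (if j = int s - int t + int i then of_nat (gor_a c t (c-i)) else 0)"
    using mid_high[OF i t s K] unfolding co_def by (cases "j = int s - int t + int i") simp_all
  finally show ?thesis unfolding co_def .
qed

theorem theorem5p4:
  fixes n s t c :: nat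
    and F :: "nat \<Rightarrow> int multiset"
    and \<beta> :: "nat \<Rightarrow> int \<Rightarrow> nat"
  assumes pos: "s > 0" "t > 0" "c > 0"
    and st: "s \<ge> 2 * t"
    and c2: "2 \<le> c" and cn: "c \<le> n"
    and F0: "F 0 = {#0#}"
    and Fc: "F c = {#int s + int c#}"
    and Fi: "\<And>i. 1 \<le> i \<Longrightarrow> i \<le> c - 1 \<Longrightarrow>
               F i = replicate_mset (gor_a c t i) (int t + int i)
                   + replicate_mset (gor_a c t (c - i)) (int s - int t + int i)"
    and Fbig: "\<And>i. i > c \<Longrightarrow> F i = {#}"
    and betti: "\<And>i j. \<beta> i j = count (F i) j"
  shows "(let a = of_int (int s + 1 - int t) * fact (t + c - 1) / (fact t :: rat);
              b = of_int (int s + 1 - 2 * int t) * fact (t + c - 1) / (fact t :: rat)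
          in a > 0 \<and> b > 0 \<and>
             (\<forall>i j. of_nat (\<beta> i j) =
                a * (pure_diagram (gor_sigma s t c 1) i j + pure_diagram (gor_sigma s t c c) i j)
              + b * (\<Sum>k = 2..c - 1. pure_diagram (gor_sigma s t c k) i j)))
         \<and> (\<forall>k. 1 \<le> k \<and> k < c \<longrightarrow> pd_le (gor_sigma s t c k) (gor_sigma s t c (k + 1)))
         \<and> (s > 2 * t \<longrightarrow> (\<forall>k. 1 \<le> k \<and> k < c \<longrightarrow> gor_sigma s t c k \<noteq> gor_sigma s t c (k + 1)))"
proof -
  obtain u where s: "s = 2*t+u" using st le_Suc_ex by blast
  define K where "K = fact (t+c-1) / (fact t :: rat)"
  have Kpos: "K > 0" unfolding K_def by simp
  have a: "of_int (int s + 1 - int t) * fact (t + c - 1) / (fact t :: rat) = (of_nat u + of_nat t + 1) * K"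
    unfolding K_def s by simp
  have b: "of_int (int s + 1 - 2 * int t) * fact (t + c - 1) / (fact t :: rat) = (of_nat u + 1) * K"
    unfolding K_def s by simp
  define A where "A = (of_nat u + of_nat t + 1) * K"
  define B where "B = (of_nat u + 1) * K"
  have Apos: "A > 0" unfolding A_def using Kpos by (simp add: add_pos_nonneg)
  have Bpos: "B > 0" unfolding B_def using Kpos by (simp add: add_pos_nonneg)
  have main: "of_nat (\<beta> i j) = A * (pure_diagram (gor_sigma s t c 1) i j + pure_diagram (gor_sigma s t c c) i j)
              + B * (\<Sum>k = 2..c - 1. pure_diagram (gor_sigma s t c k) i j)" for i j
  proof -
    have cs: "A * (pure_diagram (gor_sigma s t c 1) i j + pure_diagram (gor_sigma s t c c) i j)
              + B * (\<Sum>k = 2..c - 1. pure_diagram (gor_sigma s t c k) i j) =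
          (\<Sum>k=1..c. (if k = 1 \<or> k = c then A else B) * pure_diagram (gor_sigma s t c k) i j)"
      by (rule coef_split[OF c2])
    consider "i = 0" | "i = c" | "1 \<le> i" "i < c" | "c < i" by linarith
    then show ?thesis
    proof cases
      case 1
      show ?thesis
      proof (cases "j = 0")
        case True
        then show ?thesis unfolding cs unfolding A_def B_def using edge0[OF c2 s K_def] 1 betti F0 by simp
      next
        case False
        have "pure_diagram (gor_sigma s t c k) 0 j = 0" for k
          using False pos by (subst pd_self) (simp add: gs_nth)
        then show ?thesis unfolding cs using 1 betti F0 False by simp
      qed
    next
      case 2
      show ?thesis
      proof (cases "j = int s + int c")
        case True
        then show ?thesis unfolding cs unfolding A_def B_def using edgeC[OF c2 s K_def] 2 betti Fc by simp
      next
        case False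
        have "pure_diagram (gor_sigma s t c k) c j = 0" for k
          using False pos by (subst pd_self) (simp add: gs_nth)
        then show ?thesis unfolding cs using 2 betti Fc False by simp
      qed
    next
      case 3
      have Fi': "F i = replicate_mset (gor_a c t i) (int t + int i)
                   + replicate_mset (gor_a c t (c - i)) (int s - int t + int i)" using Fi 3 by simp
      show ?thesis unfolding cs unfolding A_def B_def mid_all[OF 3 pos(2) s K_def] using betti Fi' by simp
    next
      case 4
      have "pure_diagram (gor_sigma s t c k) i j = 0" for k
        using 4 pos by (simp add: pure_diagram_def gs_len)
      then show ?thesis unfolding cs using 4 betti Fbig by simp
    qed
  qed
  have le: "pd_le (gor_sigma s t c k) (gor_sigma s t c (k + 1))" if k: "1 \<le> k" "k < c" for k
    unfolding pd_le_def using pos k st by (auto simp: gs_len gs_nth less_Suc_eq_le)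
  have ne: "gor_sigma s t c k \<noteq> gor_sigma s t c (k + 1)" if k: "1 \<le> k" "k < c" and st': "s > 2 * t" for k
  proof
    assume eq: "gor_sigma s t c k = gor_sigma s t c (k + 1)"
    have "gor_sigma s t c k ! (c - k) = gor_sigma s t c (k+1) ! (c - k)" using eq by simp
    moreover have "c - k \<noteq> c" "\<not> c - k \<le> c - Suc k" "c - k \<noteq> 0" using k by auto
    ultimately show False using k st' pos by (simp add: gs_nth)
  qed
  show ?thesis unfolding Let_def a b A_def[symmetric] B_def[symmetric]
    using Apos Bpos main le ne by blast
qed

end
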